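(* Let $X$ be a normed space and $Y$ a Banach space, and let $l\in\{-1,1\}$. Let $f:X\to Y$ be an odd mapping satisfying $\|D_f(x,y)\|\le\phi(x,y)$ for all $x,y\in X$, where $\phi:X\times X\to[0,\infty)$ is a function such that $$\sum_{i=1}^{\infty}2^{il}\phi\left(\frac{x}{2^{il}},\frac{x}{2^{il}}\right)<\infty\quad\text{and}\quad\sum_{i=1}^{\infty}8^{il}\phi\left(\frac{x}{2^{il}},\frac{x}{2^{il}}\right)<\infty$$ for all $x\in X$, and $\lim_{n\to\infty}2^{ln}\phi\left(\frac{x}{2^{ln}},\frac{y}{2^{ln}}\right)=0$ and $\lim_{n\to\infty}8^{ln}\phi\left(\frac{x}{2^{ln}},\frac{y}{2^{ln}}\right)=0$ for all $x,y\in X$. Then there exist a unique additive function $A:X\to Y$ and a unique cubic function $C:X\to Y$ such that $$\|f(x)-A(x)-C(x)\|\le\frac{1}{12}\sum_{i=\frac{|l-1|}{2}}^{\infty}\left(2^{il}+8^{il}\right)\phi\left(\frac{x}{2^{l(i+l)}},\frac{x}{2^{l(i+l)}}\right)$$ for all $x\in X$ (the summation starts at $i=0$ if $l=1$ and at $i=1$ if $l=-1$).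
   Context: For a mapping $f:X\to Y$ define $$D_f(x,y)=3f(x+3y)-f(3x+y)-12[f(x+y)+f(x-y)]+16[f(x)+f(y)]-12f(2y)+4f(2x)$$ for $x,y\in X$. A function $g:X\to Y$ is additive if $g(x+y)=g(x)+g(y)$ for all $x,y\in X$, and cubic if $g(x+2y)-3g(x+y)+3g(x)-g(x-y)=6g(y)$ for all $x,y\in X$. *)

theory Defs
  imports "HOL-Analysis.Analysis"
begin

definition D_f :: "('a::real_vector \<Rightarrow> 'b::real_vector) \<Rightarrow> 'a \<Rightarrow> 'a \<Rightarrow> 'b" where
  "D_f f x y = 3 *\<^sub>R f (x + 3 *\<^sub>R y) - f (3 *\<^sub>R x + y)
     - 12 *\<^sub>R (f (x + y) + f (x - y)) + 16 *\<^sub>R (f x + f y)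
     - 12 *\<^sub>R f (2 *\<^sub>R y) + 4 *\<^sub>R f (2 *\<^sub>R x)"

definition is_additive :: "('a::real_vector \<Rightarrow> 'b::real_vector) \<Rightarrow> bool" where
  "is_additive g \<longleftrightarrow> (\<forall>x y. g (x + y) = g x + g y)"

definition is_cubic :: "('a::real_vector \<Rightarrow> 'b::real_vector) \<Rightarrow> bool" where
  "is_cubic g \<longleftrightarrow> (\<forall>x y. g (x + 2 *\<^sub>R y) - 3 *\<^sub>R g (x + y) + 3 *\<^sub>R g x - g (x - y) = 6 *\<^sub>R g y)"

end

theory Submission
  imports Defs
begin

lemma sep:
  fixes v :: "'b::real_vector"
  assumes "v \<noteq> 0"
  shows "\<exists>g::'b\<Rightarrow>real. linear g \<and> g v = 1"
proof -
  have "independent {v}" using assms by (simp add: independent_insert)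
  from linear_independent_extend[OF this, of "\<lambda>_. 1::real"]
  show ?thesis by auto
qed

lemma vec_eq_by_lin:
  fixes a b :: "'b::real_vector"
  assumes "\<And>g::'b\<Rightarrow>real. linear g \<Longrightarrow> g a = g b"
  shows "a = b"
proof (rule ccontr)
  assume "a \<noteq> b"
  then obtain g :: "'b\<Rightarrow>real" where g: "linear g" "g (a - b) = 1" using sep[of "a-b"] by auto
  have "g a = g b" using assms g(1) .
  then show False using g linear_diff[OF g(1)] by simp
qed

lemma add_real:
  fixes G :: "'a::real_vector \<Rightarrow> real"
  assumes odd: "\<And>x. G (-x) = - G x" and D: "\<And>x y. D_f G x y = 0"
    and h2: "\<And>x. G (2 *\<^sub>R x) = 2 * G x"
  shows "G (x + y) + G (x - y) = 2 * G x"
proof -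
  have G0: "G 0 = 0" using odd[of 0] by simp
  have E: "3 * G (a + 3 *\<^sub>R b) - G (3 *\<^sub>R a + b) - 12 * G (a + b) - 12 * G (a - b) + 24 * G a - 8 * G b = 0" for a b
    using D[of a b] h2[of a] h2[of b] by (simp add: D_f_def)
  have G3: "G (3 *\<^sub>R a) = 3 * G a" for a
    using E[of a 0] G0 by simp
  have S: "8 * G (3 *\<^sub>R a + b) = 48 * G (a + b) - 24 * G (a - b) - 64 * G b" for a b
  proof -
    have o: "G (b - a) = - G (a - b)" using odd[of "a - b"] by simp
    show ?thesis using E[of a b] E[of b a] o by (simp add: algebra_simps)
  qed
  have J3: "G (3 *\<^sub>R a + b) + G (3 *\<^sub>R a - b) = 3 * (G (a + b) + G (a - b))" for a b
    using S[of a b] S[of a "-b"] odd[of b] by (simp add: algebra_simps)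
  have Jy3: "8 * (G (a + 3 *\<^sub>R b) + G (a - 3 *\<^sub>R b)) = 72 * (G (a + b) + G (a - b)) - 128 * G a" for a b
  proof -
    have o1: "G (b - a) = - G (a - b)" using odd[of "a - b"] by simp
    have o2: "G (- b - a) = - G (a + b)"
    proof -
      have e: "- b - a = - (a + b)" by simp
      show ?thesis by (metis odd e)
    qed
    show ?thesis using S[of b a] S[of "-b" a] o1 o2 by (simp add: algebra_simps)
  qed
  have A: "8 * (G (3 *\<^sub>R x + 3 *\<^sub>R y) + G (3 *\<^sub>R x - 3 *\<^sub>R y)) = 72 * (G (3 *\<^sub>R x + y) + G (3 *\<^sub>R x - y)) - 128 * G (3 *\<^sub>R x)"
    using Jy3[of "3 *\<^sub>R x" y] by simp
  have B: "G (3 *\<^sub>R x + 3 *\<^sub>R y) = 3 * G (x + y)" "G (3 *\<^sub>R x - 3 *\<^sub>R y) = 3 * G (x - y)"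
    using G3[of "x+y"] G3[of "x - y"] by (simp_all add: algebra_simps)
  show ?thesis using A B J3[of x y] G3[of x] by simp
qed


lemma sc4: "w + 3 *\<^sub>R w = 4 *\<^sub>R (w::'a::real_vector)"
proof -
  have "(4::real) *\<^sub>R w = (1+3) *\<^sub>R w" by simp
  also have "\<dots> = w + 3 *\<^sub>R w" by (simp only: scaleR_left_distrib scaleR_one)
  finally show ?thesis by simp
qed
lemma sc3m: "3 *\<^sub>R w - w = 2 *\<^sub>R (w::'a::real_vector)"
proof -
  have "(2::real) *\<^sub>R w = (3-1) *\<^sub>R w" by simp
  also have "\<dots> = 3 *\<^sub>R w - w" by (simp only: scaleR_left_diff_distrib scaleR_one)
  finally show ?thesis by simp
qed

lemma cub_real:
  fixes G :: "'a::real_vector \<Rightarrow> real"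
  assumes odd: "\<And>x. G (-x) = - G x" and D: "\<And>x y. D_f G x y = 0"
    and h8: "\<And>x. G (2 *\<^sub>R x) = 8 * G x"
  shows "G (x + 2 *\<^sub>R y) - 3 * G (x + y) + 3 * G x - G (x - y) = 6 * G y"
proof -
  have G0: "G 0 = 0" using odd[of 0] by simp
  have E: "3 * G (a + 3 *\<^sub>R b) - G (3 *\<^sub>R a + b) - 12 * G (a + b) - 12 * G (a - b) + 48 * G a - 80 * G b = 0" for a b
    using D[of a b] h8[of a] h8[of b] by (simp add: D_f_def)
  have S: "8 * G (3 *\<^sub>R a + b) = 48 * G (a + b) - 24 * G (a - b) + 192 * G a - 64 * G b" for a b
  proof -
    have o: "G (b - a) = - G (a - b)" using odd[of "a - b"] by simp
    show ?thesis using E[of a b] E[of b a] o by (simp add: algebra_simps)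
  qed
  have Dif: "G (a + 3 *\<^sub>R b) - G (a - 3 *\<^sub>R b) = 3 * G (a + b) - 3 * G (a - b) + 48 * G b" for a b
  proof -
    have o1: "G (b - a) = - G (a - b)" using odd[of "a - b"] by simp
    have o2: "G (- b - a) = - G (a + b)"
    proof -
      have e: "- b - a = - (a + b)" by simp
      show ?thesis by (metis odd e)
    qed
    show ?thesis using S[of b a] S[of "-b" a] o1 o2 odd[of b] by (simp add: algebra_simps)
  qed
  define w where "w = (1/2::real) *\<^sub>R y"
  have y: "y = 2 *\<^sub>R w" by (simp add: w_def)
  have a1: "x + w + 3 *\<^sub>R w = x + 2 *\<^sub>R y" by (simp add: y sc4 add.assoc)
  have a2: "x + w - 3 *\<^sub>R w = x - y"
  proof -
    have "x + w - 3 *\<^sub>R w = x - (3 *\<^sub>R w - w)" by (simp add: algebra_simps)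
    then show ?thesis by (simp add: sc3m y)
  qed
  have a3: "x + w + w = x + y" by (simp add: y scaleR_2 add.assoc)
  have a4: "x + w - w = x" by simp
  have gy: "G y = 8 * G w" by (simp add: y h8)
  show ?thesis using Dif[of "x + w" w] a1 a2 a3 a4 gy by simp
qed



lemma core:
  fixes u :: "'a::real_normed_vector \<Rightarrow> 'b::banach" and m r :: real
  assumes m: "m > 0"
    and st: "\<And>x. norm (m *\<^sub>R u (r *\<^sub>R x) - u x) \<le> \<psi> x"
    and sm: "\<And>x. summable (\<lambda>n. m^n * \<psi> (r^n *\<^sub>R x))"
  shows "\<exists>A. (\<forall>x. (\<lambda>n. m^n *\<^sub>R u (r^n *\<^sub>R x)) \<longlonglongrightarrow> A x)
     \<and> (\<forall>x. norm (u x - A x) \<le> (\<Sum>n. m^n * \<psi> (r^n *\<^sub>R x)))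
     \<and> (\<forall>x. A x = m *\<^sub>R A (r *\<^sub>R x))"
proof -
  define U where "U x n = m^n *\<^sub>R u (r^n *\<^sub>R x)" for x n
  define d where "d x k = U x (Suc k) - U x k" for x k
  have dle: "norm (d x k) \<le> m^k * \<psi> (r^k *\<^sub>R x)" for x k
  proof -
    have "d x k = m^k *\<^sub>R (m *\<^sub>R u (r *\<^sub>R (r^k *\<^sub>R x)) - u (r^k *\<^sub>R x))"
      by (simp add: d_def U_def algebra_simps)
    then have "norm (d x k) = m^k * norm (m *\<^sub>R u (r *\<^sub>R (r^k *\<^sub>R x)) - u (r^k *\<^sub>R x))"
      using m by simp
    also have "\<dots> \<le> m^k * \<psi> (r^k *\<^sub>R x)"
      using st[of "r^k *\<^sub>R x"] m by (intro mult_left_mono) auto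
    finally show ?thesis .
  qed
  have sn: "summable (\<lambda>k. norm (d x k))" for x
    by (rule summable_comparison_test[OF _ sm[of x]]) (use dle in auto)
  have sd: "summable (d x)" for x using summable_norm_cancel[OF sn] .
  define A where "A x = u x + suminf (d x)" for x
  have tel: "U x n = u x + (\<Sum>k<n. d x k)" for x n
    by (simp only: d_def sum_lessThan_telescope) (simp add: U_def)
  have lim: "(\<lambda>n. U x n) \<longlonglongrightarrow> A x" for x
    unfolding tel A_def by (intro tendsto_add tendsto_const summable_LIMSEQ sd)
  have bd: "norm (u x - A x) \<le> (\<Sum>n. m^n * \<psi> (r^n *\<^sub>R x))" for x
  proof -
    have "norm (u x - A x) = norm (suminf (d x))" by (simp add: A_def)
    also have "\<dots> \<le> (\<Sum>k. norm (d x k))" by (rule summable_norm[OF sn])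
    also have "\<dots> \<le> (\<Sum>n. m^n * \<psi> (r^n *\<^sub>R x))"
      by (rule suminf_le[OF dle sn sm])
    finally show ?thesis .
  qed
  have hom: "A x = m *\<^sub>R A (r *\<^sub>R x)" for x
  proof -
    have "(\<lambda>n. U x (Suc n)) \<longlonglongrightarrow> A x" using lim[of x] by (rule LIMSEQ_Suc)
    moreover have "(\<lambda>n. U x (Suc n)) = (\<lambda>n. m *\<^sub>R U (r *\<^sub>R x) n)"
      by (simp add: U_def mult.commute)
    moreover have "(\<lambda>n. m *\<^sub>R U (r *\<^sub>R x) n) \<longlonglongrightarrow> m *\<^sub>R A (r *\<^sub>R x)"
      by (intro tendsto_scaleR tendsto_const lim)
    ultimately show ?thesis using LIMSEQ_unique by metis
  qed
  show ?thesis using lim bd hom unfolding U_def by blast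
qed



lemma D_scale: "D_f (\<lambda>z. c *\<^sub>R u (s *\<^sub>R z)) x y = c *\<^sub>R D_f u (s *\<^sub>R x) (s *\<^sub>R y)"
  by (simp add: D_f_def algebra_simps)

lemma D_diff: "D_f (\<lambda>z. F z - c *\<^sub>R G z) x y = D_f F x y - c *\<^sub>R D_f G x y"
  by (simp add: D_f_def algebra_simps)

lemma D_lim:
  fixes U :: "nat \<Rightarrow> 'a::real_vector \<Rightarrow> 'b::real_normed_vector"
  assumes "\<And>x. (\<lambda>n. U n x) \<longlonglongrightarrow> A x"
  shows "(\<lambda>n. D_f (U n) x y) \<longlonglongrightarrow> D_f A x y"
  unfolding D_f_def by (intro tendsto_add tendsto_diff tendsto_scaleR tendsto_const assms)

lemma part:
  fixes f :: "'a::real_normed_vector \<Rightarrow> 'b::banach" and m r c :: real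
  assumes m: "m > 0"
    and odd: "\<And>x. f (-x) = - f x"
    and stab: "\<And>x y. norm (D_f f x y) \<le> \<phi> x y"
    and lim: "\<And>x y. (\<lambda>n. m^n * \<phi> (r^n *\<^sub>R x) (r^n *\<^sub>R y)) \<longlonglongrightarrow> 0"
    and u_def: "u = (\<lambda>x. f (2 *\<^sub>R x) - c *\<^sub>R f x)"
    and st: "\<And>x. norm (m *\<^sub>R u (r *\<^sub>R x) - u x) \<le> \<psi> x"
    and sm: "\<And>x. summable (\<lambda>n. m^n * \<psi> (r^n *\<^sub>R x))"
  shows "\<exists>A. (\<forall>x. norm (u x - A x) \<le> (\<Sum>n. m^n * \<psi> (r^n *\<^sub>R x)))
     \<and> (\<forall>x. A x = m *\<^sub>R A (r *\<^sub>R x)) \<and> (\<forall>x y. D_f A x y = 0) \<and> (\<forall>x. A (-x) = - A x)"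
proof -
  obtain A where lA: "\<And>x. (\<lambda>n. m^n *\<^sub>R u (r^n *\<^sub>R x)) \<longlonglongrightarrow> A x"
    and bA: "\<And>x. norm (u x - A x) \<le> (\<Sum>n. m^n * \<psi> (r^n *\<^sub>R x))"
    and hA: "\<And>x. A x = m *\<^sub>R A (r *\<^sub>R x)"
    using core[of m u r \<psi>, OF m st sm] by blast
  define U where "U n x = m^n *\<^sub>R u (r^n *\<^sub>R x)" for n x
  have lU: "(\<lambda>n. U n x) \<longlonglongrightarrow> A x" for x unfolding U_def by (rule lA)
  have Du: "D_f u a b = D_f f (2 *\<^sub>R a) (2 *\<^sub>R b) - c *\<^sub>R D_f f a b" for a b
    using D_diff[of "\<lambda>z. f (2 *\<^sub>R z)" c f a b] D_scale[of 1 f 2 a b] unfolding u_def by simp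
  have DU: "D_f (U n) x y = m^n *\<^sub>R D_f u (r^n *\<^sub>R x) (r^n *\<^sub>R y)" for n x y
    unfolding U_def by (rule D_scale)
  have DA: "D_f A x y = 0" for x y
  proof -
    have "(\<lambda>n. D_f (U n) x y) \<longlonglongrightarrow> 0"
    proof (rule Lim_null_comparison)
      show "\<forall>\<^sub>F n in sequentially. norm (D_f (U n) x y) \<le>
         m^n * \<phi> (r^n *\<^sub>R (2 *\<^sub>R x)) (r^n *\<^sub>R (2 *\<^sub>R y)) + \<bar>c\<bar> * (m^n * \<phi> (r^n *\<^sub>R x) (r^n *\<^sub>R y))"
      proof (intro always_eventually allI)
        fix n
        have "norm (D_f (U n) x y) = m^n * norm (D_f f (2 *\<^sub>R (r^n *\<^sub>R x)) (2 *\<^sub>R (r^n *\<^sub>R y)) - c *\<^sub>R D_f f (r^n *\<^sub>R x) (r^n *\<^sub>R y))"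
          using m by (simp add: DU Du)
        also have "\<dots> \<le> m^n * (norm (D_f f (2 *\<^sub>R (r^n *\<^sub>R x)) (2 *\<^sub>R (r^n *\<^sub>R y))) + \<bar>c\<bar> * norm (D_f f (r^n *\<^sub>R x) (r^n *\<^sub>R y)))"
          using m by (intro mult_left_mono) (auto intro: order_trans[OF norm_triangle_ineq4])
        also have "\<dots> \<le> m^n * (\<phi> (r^n *\<^sub>R (2 *\<^sub>R x)) (r^n *\<^sub>R (2 *\<^sub>R y)) + \<bar>c\<bar> * \<phi> (r^n *\<^sub>R x) (r^n *\<^sub>R y))"
          using m stab[of "2 *\<^sub>R (r^n *\<^sub>R x)" "2 *\<^sub>R (r^n *\<^sub>R y)"] stab[of "r^n *\<^sub>R x" "r^n *\<^sub>R y"]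
          by (intro mult_left_mono add_mono) (auto simp: mult.commute intro: mult_left_mono)
        finally show "norm (D_f (U n) x y) \<le> m^n * \<phi> (r^n *\<^sub>R (2 *\<^sub>R x)) (r^n *\<^sub>R (2 *\<^sub>R y)) + \<bar>c\<bar> * (m^n * \<phi> (r^n *\<^sub>R x) (r^n *\<^sub>R y))"
          by (simp add: algebra_simps)
      qed
      show "(\<lambda>n. m^n * \<phi> (r^n *\<^sub>R (2 *\<^sub>R x)) (r^n *\<^sub>R (2 *\<^sub>R y)) + \<bar>c\<bar> * (m^n * \<phi> (r^n *\<^sub>R x) (r^n *\<^sub>R y))) \<longlonglongrightarrow> 0"
        using tendsto_add[OF lim[of "2 *\<^sub>R x" "2 *\<^sub>R y"] tendsto_mult[OF tendsto_const lim[of x y]]] by simp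
    qed
    moreover have "(\<lambda>n. D_f (U n) x y) \<longlonglongrightarrow> D_f A x y" by (rule D_lim[OF lU])
    ultimately show ?thesis using LIMSEQ_unique by metis
  qed
  have oA: "A (-x) = - A x" for x
  proof -
    have "U n (-x) = - U n x" for n by (simp add: U_def u_def odd algebra_simps)
    then have "(\<lambda>n. U n (-x)) = (\<lambda>n. - U n x)" by auto
    moreover have "(\<lambda>n. - U n x) \<longlonglongrightarrow> - A x" by (intro tendsto_minus lU)
    ultimately show ?thesis using lU[of "-x"] LIMSEQ_unique by metis
  qed
  show ?thesis using bA hA DA oA by blast
qed



lemma lin_D: "linear g \<Longrightarrow> D_f (\<lambda>x. g (F x)) a b = g (D_f F a b)"
  by (simp add: D_f_def linear_add linear_diff linear_scale)

lemma D_smult: "D_f (\<lambda>z. c *\<^sub>R F z) x y = c *\<^sub>R D_f F x y"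
  by (simp add: D_f_def algebra_simps)

lemma additive_vec:
  fixes F :: "'a::real_vector \<Rightarrow> 'b::real_vector"
  assumes odd: "\<And>x. F (-x) = - F x" and D: "\<And>x y. D_f F x y = 0"
    and h2: "\<And>x. F (2 *\<^sub>R x) = 2 *\<^sub>R F x"
  shows "is_additive F"
proof -
  have J: "F (x + y) + F (x - y) = 2 *\<^sub>R F x" for x y
  proof (rule vec_eq_by_lin)
    fix g :: "'b \<Rightarrow> real" assume lg: "linear g"
    have "(\<lambda>z. g (F z)) (x + y) + (\<lambda>z. g (F z)) (x - y) = 2 * (\<lambda>z. g (F z)) x"
      by (rule add_real) (auto simp: lin_D[OF lg] D odd h2 linear_neg[OF lg] linear_scale[OF lg] linear_0[OF lg])
    then show "g (F (x + y) + F (x - y)) = g (2 *\<^sub>R F x)" by (simp add: linear_add[OF lg] linear_scale[OF lg])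
  qed
  show ?thesis unfolding is_additive_def
  proof (intro allI)
    fix a b :: 'a
    have e1: "(1/2::real) *\<^sub>R (a+b) + (1/2::real) *\<^sub>R (a-b) = a"
      by (simp add: algebra_simps flip: scaleR_left_distrib)
    have e2: "(1/2::real) *\<^sub>R (a+b) - (1/2::real) *\<^sub>R (a-b) = b"
      by (simp add: algebra_simps flip: scaleR_left_distrib)
    have "F a + F b = 2 *\<^sub>R F ((1/2::real) *\<^sub>R (a+b))"
      using J[of "(1/2::real) *\<^sub>R (a+b)" "(1/2::real) *\<^sub>R (a-b)"] e1 e2 by simp
    also have "\<dots> = F (a + b)" using h2[of "(1/2::real) *\<^sub>R (a+b)"] by simp
    finally show "F (a + b) = F a + F b" by simp
  qed
qed

lemma cubic_vec:
  fixes F :: "'a::real_vector \<Rightarrow> 'b::real_vector"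
  assumes odd: "\<And>x. F (-x) = - F x" and D: "\<And>x y. D_f F x y = 0"
    and h8: "\<And>x. F (2 *\<^sub>R x) = 8 *\<^sub>R F x"
  shows "is_cubic F"
  unfolding is_cubic_def
proof (intro allI)
  fix x y :: 'a
  show "F (x + 2 *\<^sub>R y) - 3 *\<^sub>R F (x + y) + 3 *\<^sub>R F x - F (x - y) = 6 *\<^sub>R F y"
  proof (rule vec_eq_by_lin)
    fix g :: "'b \<Rightarrow> real" assume lg: "linear g"
    have "(\<lambda>z. g (F z)) (x + 2 *\<^sub>R y) - 3 * (\<lambda>z. g (F z)) (x + y) + 3 * (\<lambda>z. g (F z)) x - (\<lambda>z. g (F z)) (x - y) = 6 * (\<lambda>z. g (F z)) y"
      by (rule cub_real) (auto simp: lin_D[OF lg] D odd h8 linear_neg[OF lg] linear_scale[OF lg] linear_0[OF lg])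
    then show "g (F (x + 2 *\<^sub>R y) - 3 *\<^sub>R F (x + y) + 3 *\<^sub>R F x - F (x - y)) = g (6 *\<^sub>R F y)"
      by (simp add: linear_add[OF lg] linear_diff[OF lg] linear_scale[OF lg])
  qed
qed

lemma cubic_props:
  fixes c :: "'a::real_vector \<Rightarrow> 'b::real_vector"
  assumes "is_cubic c"
  shows "c (-x) = - c x" "c (2 *\<^sub>R x) = 8 *\<^sub>R c x"
proof -
  have e: "\<And>x y. c (x + 2 *\<^sub>R y) - 3 *\<^sub>R c (x + y) + 3 *\<^sub>R c x - c (x - y) = 6 *\<^sub>R c y"
    using assms by (simp add: is_cubic_def)
  have c0: "c 0 = 0" using e[of 0 0] by (simp add: algebra_simps)
  have o: "c (-y) = - c y" for y
  proof (rule vec_eq_by_lin)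
    fix g :: "'b \<Rightarrow> real" assume lg: "linear g"
    have e1: "-y + 2 *\<^sub>R y = y" by (simp add: scaleR_2)
    have e2: "-y - y = - (2 *\<^sub>R y)" by (simp add: scaleR_2)
    have a: "g (c (2 *\<^sub>R y)) - 3 * g (c y) - g (c (-y)) = 6 * g (c y)"
      using arg_cong[OF e[of 0 y], of g] c0 by (simp add: linear_add[OF lg] linear_diff[OF lg] linear_scale[OF lg] linear_0[OF lg])
    have b: "g (c (-(2 *\<^sub>R y))) - 3 * g (c (-y)) - g (c y) = 6 * g (c (-y))"
      using arg_cong[OF e[of 0 "-y"], of g] c0 by (simp add: linear_add[OF lg] linear_diff[OF lg] linear_scale[OF lg] linear_0[OF lg])
    have d: "g (c y) - 3 * g (c 0) + 3 * g (c (-y)) - g (c (-(2 *\<^sub>R y))) = 6 * g (c y)"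
      using arg_cong[OF e[of "-y" y], of g] e1 e2 by (simp add: linear_add[OF lg] linear_diff[OF lg] linear_scale[OF lg] linear_0[OF lg])
    show "g (c (-y)) = g (- c y)" using a b d c0 by (simp add: linear_neg[OF lg] linear_0[OF lg])
  qed
  show "c (-x) = - c x" by (rule o)
  show "c (2 *\<^sub>R x) = 8 *\<^sub>R c x"
  proof (rule vec_eq_by_lin)
    fix g :: "'b \<Rightarrow> real" assume lg: "linear g"
    have a: "g (c (2 *\<^sub>R x)) - 3 * g (c x) - g (c (-x)) = 6 * g (c x)"
      using arg_cong[OF e[of 0 x], of g] c0 by (simp add: linear_add[OF lg] linear_diff[OF lg] linear_scale[OF lg] linear_0[OF lg])
    then show "g (c (2 *\<^sub>R x)) = g (8 *\<^sub>R c x)" using o[of x] by (simp add: linear_neg[OF lg] linear_scale[OF lg])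
  qed
qed

lemma additive_half:
  fixes a :: "'a::real_vector \<Rightarrow> 'b::real_vector"
  assumes "is_additive a"
  shows "a (2 *\<^sub>R x) = 2 *\<^sub>R a x"
  using assms unfolding is_additive_def by (metis scaleR_2)




lemma kill:
  fixes u v :: "'a::real_vector \<Rightarrow> 'b::real_normed_vector"
  assumes hu: "\<And>n. u (r^n *\<^sub>R x) = \<alpha>^n *\<^sub>R u x" and hv: "\<And>n. v (r^n *\<^sub>R x) = \<beta>^n *\<^sub>R v x"
    and b0: "0 < \<beta>" and ba: "\<beta> < \<alpha>"
    and bd: "\<And>n. norm (u (r^n *\<^sub>R x) + v (r^n *\<^sub>R x)) \<le> N n"
    and lN: "(\<lambda>n. N n / \<beta>^n) \<longlonglongrightarrow> 0"
  shows "u x = 0 \<and> v x = 0"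
proof -
  have a0: "0 < \<alpha>" using b0 ba by simp
  have N0: "0 \<le> N n" for n using bd[of n] norm_ge_zero order_trans by blast
  define s where "s n = (1 / \<alpha>^n) *\<^sub>R (u (r^n *\<^sub>R x) + v (r^n *\<^sub>R x))" for n
  have s_eq: "s n = u x + (\<beta>/\<alpha>)^n *\<^sub>R v x" for n
    using a0 by (simp add: s_def hu hv scaleR_right_distrib power_divide)
  have "s \<longlonglongrightarrow> u x + 0 *\<^sub>R v x"
    unfolding s_eq[abs_def]
    by (intro tendsto_add tendsto_const tendsto_scaleR LIMSEQ_power_zero) (use b0 ba in auto)
  moreover have "s \<longlonglongrightarrow> 0"
  proof (rule Lim_null_comparison[OF always_eventually[OF allI] lN])
    fix n
    have "norm (s n) = N' n" if "N' n = norm (u (r^n *\<^sub>R x) + v (r^n *\<^sub>R x)) / \<alpha>^n" for N'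
      using that a0 by (simp add: s_def)
    have "norm (s n) = norm (u (r^n *\<^sub>R x) + v (r^n *\<^sub>R x)) / \<alpha>^n"
      using a0 by (simp add: s_def)
    also have "\<dots> \<le> N n / \<alpha>^n" using bd[of n] a0 by (simp add: divide_right_mono)
    also have "\<dots> \<le> N n / \<beta>^n"
      using N0[of n] b0 ba by (intro divide_left_mono power_mono mult_pos_pos zero_less_power) auto
    finally show "norm (s n) \<le> N n / \<beta>^n" .
  qed
  ultimately have ux: "u x = 0" using LIMSEQ_unique by fastforce
  have "(\<lambda>n. v x) \<longlonglongrightarrow> 0"
  proof (rule Lim_null_comparison[OF always_eventually[OF allI] lN])
    fix n
    have "u (r^n *\<^sub>R x) + v (r^n *\<^sub>R x) = \<beta>^n *\<^sub>R v x" by (simp add: hu hv ux)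
    then have "norm (v x) = norm (u (r^n *\<^sub>R x) + v (r^n *\<^sub>R x)) / \<beta>^n" using b0 by simp
    also have "\<dots> \<le> N n / \<beta>^n" using bd[of n] b0 by (simp add: divide_right_mono)
    finally show "norm (v x) \<le> N n / \<beta>^n" .
  qed
  then have "v x = 0" using LIMSEQ_unique tendsto_const by blast
  with ux show ?thesis by simp
qed

lemma tail0:
  fixes t :: "nat \<Rightarrow> real"
  assumes "summable t"
  shows "(\<lambda>n. \<Sum>k. t (k + n)) \<longlonglongrightarrow> 0"
proof -
  have "(\<lambda>n. suminf t - (\<Sum>i<n. t i)) \<longlonglongrightarrow> suminf t - suminf t"
    by (intro tendsto_diff tendsto_const summable_LIMSEQ assms)
  then show ?thesis using suminf_minus_initial_segment[OF assms] by simp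
qed

lemma pow_hom:
  fixes a :: "'a::real_vector \<Rightarrow> 'b::real_vector"
  assumes "\<And>y. a (r *\<^sub>R y) = k *\<^sub>R a y"
  shows "a (r^n *\<^sub>R x) = k^n *\<^sub>R a x"
proof (induction n)
  case 0 then show ?case by simp
next
  case (Suc n)
  have "a (r^Suc n *\<^sub>R x) = a (r *\<^sub>R (r^n *\<^sub>R x))" by simp
  also have "\<dots> = k *\<^sub>R a (r^n *\<^sub>R x)" by (rule assms)
  finally show ?case using Suc by simp
qed

lemma Dzz:
  fixes f :: "'a::real_vector \<Rightarrow> 'b::real_vector"
  assumes "f 0 = 0"
  shows "D_f f z z = 2 *\<^sub>R f (4 *\<^sub>R z) - 20 *\<^sub>R f (2 *\<^sub>R z) + 32 *\<^sub>R f z"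
proof (rule vec_eq_by_lin)
  fix g :: "'b \<Rightarrow> real" assume lg: "linear g"
  have e1: "3 *\<^sub>R z + z = 4 *\<^sub>R z" using sc4[of z] by (simp add: add.commute)
  have e2: "z + z = 2 *\<^sub>R z" by (simp add: scaleR_2)
  show "g (D_f f z z) = g (2 *\<^sub>R f (4 *\<^sub>R z) - 20 *\<^sub>R f (2 *\<^sub>R z) + 32 *\<^sub>R f z)"
    by (simp add: D_f_def sc4 e1 e2 assms linear_add[OF lg] linear_diff[OF lg] linear_scale[OF lg] linear_0[OF lg])
qed

lemma st_id:
  fixes f :: "'a::real_vector \<Rightarrow> 'b::real_vector"
  assumes "f 0 = 0"
  shows "2 *\<^sub>R (f (2 *\<^sub>R z) - 8 *\<^sub>R f z) - (f (2 *\<^sub>R (2 *\<^sub>R z)) - 8 *\<^sub>R f (2 *\<^sub>R z)) = (-1/2) *\<^sub>R D_f f z z"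
    and "8 *\<^sub>R (f (2 *\<^sub>R z) - 2 *\<^sub>R f z) - (f (2 *\<^sub>R (2 *\<^sub>R z)) - 2 *\<^sub>R f (2 *\<^sub>R z)) = (-1/2) *\<^sub>R D_f f z z"
    and "(1/2) *\<^sub>R (f (2 *\<^sub>R (2 *\<^sub>R z)) - 8 *\<^sub>R f (2 *\<^sub>R z)) - (f (2 *\<^sub>R z) - 8 *\<^sub>R f z) = (1/4) *\<^sub>R D_f f z z"
    and "(1/8) *\<^sub>R (f (2 *\<^sub>R (2 *\<^sub>R z)) - 2 *\<^sub>R f (2 *\<^sub>R z)) - (f (2 *\<^sub>R z) - 2 *\<^sub>R f z) = (1/16) *\<^sub>R D_f f z z"
  by (rule vec_eq_by_lin, simp add: Dzz[of f, OF assms] linear_add linear_diff linear_scale linear_neg)+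

lemma decomp_id:
  fixes f :: "'a::real_vector \<Rightarrow> 'b::real_vector"
  shows "f x - (-1/6) *\<^sub>R A - (1/6) *\<^sub>R C = (1/6) *\<^sub>R ((f (2 *\<^sub>R x) - 2 *\<^sub>R f x - C) - (f (2 *\<^sub>R x) - 8 *\<^sub>R f x - A))"
  by (rule vec_eq_by_lin, simp add: linear_add linear_diff linear_scale linear_neg)

lemma main1:
  fixes f :: "'a::real_normed_vector \<Rightarrow> 'b::banach"
    and \<phi> :: "'a \<Rightarrow> 'a \<Rightarrow> real"
  assumes odd: "\<And>x. f (- x) = - f x"
    and phi_nonneg: "\<And>x y. \<phi> x y \<ge> 0"
    and stab: "\<And>x y. norm (D_f f x y) \<le> \<phi> x y"
    and s2: "\<And>x. summable (\<lambda>i. (2::real) ^ Suc i * \<phi> (inverse (2 ^ Suc i) *\<^sub>R x) (inverse (2 ^ Suc i) *\<^sub>R x))"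
    and s8: "\<And>x. summable (\<lambda>i. (8::real) ^ Suc i * \<phi> (inverse (2 ^ Suc i) *\<^sub>R x) (inverse (2 ^ Suc i) *\<^sub>R x))"
    and l2: "\<And>x y. (\<lambda>n. (2::real) ^ n * \<phi> (inverse (2 ^ n) *\<^sub>R x) (inverse (2 ^ n) *\<^sub>R y)) \<longlonglongrightarrow> 0"
    and l8: "\<And>x y. (\<lambda>n. (8::real) ^ n * \<phi> (inverse (2 ^ n) *\<^sub>R x) (inverse (2 ^ n) *\<^sub>R y)) \<longlonglongrightarrow> 0"
  shows "\<exists>A C. is_additive A \<and> is_cubic C \<and>
     (\<forall>x. norm (f x - A x - C x) \<le> (1/12) *
        (\<Sum>k. ((2::real) ^ k + 8 ^ k) * \<phi> (inverse (2 ^ Suc k) *\<^sub>R x) (inverse (2 ^ Suc k) *\<^sub>R x))) \<and>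
     (\<forall>A' C'. is_additive A' \<and> is_cubic C' \<and>
        (\<forall>x. norm (f x - A' x - C' x) \<le> (1/12) *
          (\<Sum>k. ((2::real) ^ k + 8 ^ k) * \<phi> (inverse (2 ^ Suc k) *\<^sub>R x) (inverse (2 ^ Suc k) *\<^sub>R x)))
        \<longrightarrow> A' = A \<and> C' = C)"
proof -
  define r :: real where "r = inverse 2"
  define P where "P x k = \<phi> (inverse (2 ^ Suc k) *\<^sub>R x) (inverse (2 ^ Suc k) *\<^sub>R x)" for x k
  define \<psi> where "\<psi> x = \<phi> (r *\<^sub>R x) (r *\<^sub>R x) / 2" for x
  define M where "M x = (1/12) * (\<Sum>k. ((2::real) ^ k + 8 ^ k) * P x k)" for x
  have f0: "f 0 = 0"
  proof -
    have "f 0 + f 0 = 0" using odd[of 0] by (simp add: eq_neg_iff_add_eq_0)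
    then have "2 *\<^sub>R f 0 = 0" by (simp add: scaleR_2)
    then show ?thesis by simp
  qed
  have rn: "r^n = inverse (2^n)" for n unfolding r_def by (rule power_inverse)
  have rr: "r *\<^sub>R (r^n *\<^sub>R x) = inverse (2 ^ Suc n) *\<^sub>R x" for n and x :: 'a
  proof -
    have "r *\<^sub>R (r^n *\<^sub>R x) = r ^ Suc n *\<^sub>R x" by simp
    then show ?thesis by (simp only: rn)
  qed
  have P0: "P x k \<ge> 0" for x k by (simp add: P_def phi_nonneg)
  have psi_eq: "\<psi> (r^n *\<^sub>R x) = P x n / 2" for n x by (simp only: \<psi>_def P_def rr)
  have s2': "summable (\<lambda>n. 2^n * P x n)" for x
  proof -
    have "summable (\<lambda>n. 2 ^ Suc n * P x n / 2)" using summable_divide[OF s2[of x], of 2] unfolding P_def .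
    then show ?thesis by simp
  qed
  have s8': "summable (\<lambda>n. 8^n * P x n)" for x
  proof -
    have "summable (\<lambda>n. 8 ^ Suc n * P x n / 8)" using summable_divide[OF s8[of x], of 8] unfolding P_def .
    then show ?thesis by simp
  qed
  have sM: "summable (\<lambda>k. ((2::real) ^ k + 8 ^ k) * P y k)" for y
    using summable_add[OF s2'[of y] s8'[of y]] by (simp add: distrib_right)
  have sa: "summable (\<lambda>n. 2^n * \<psi> (r^n *\<^sub>R x))" for x
    using summable_divide[OF s2'[of x], of 2] by (simp add: psi_eq)
  have sc: "summable (\<lambda>n. 8^n * \<psi> (r^n *\<^sub>R x))" for x
    using summable_divide[OF s8'[of x], of 2] by (simp add: psi_eq)
  have l2': "(\<lambda>n. 2^n * \<phi> (r^n *\<^sub>R x) (r^n *\<^sub>R y)) \<longlonglongrightarrow> 0" for x y using l2[of x y] by (simp add: rn)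
  have l8': "(\<lambda>n. 8^n * \<phi> (r^n *\<^sub>R x) (r^n *\<^sub>R y)) \<longlonglongrightarrow> 0" for x y using l8[of x y] by (simp add: rn)
  have x2: "x = 2 *\<^sub>R (r *\<^sub>R x)" for x :: 'a by (simp add: r_def)
  have nD: "norm ((-1/2::real) *\<^sub>R D_f f z z) \<le> \<phi> z z / 2" for z using stab[of z z] by simp
  have sta: "norm (2 *\<^sub>R (\<lambda>x. f (2 *\<^sub>R x) - 8 *\<^sub>R f x) (r *\<^sub>R x) - (\<lambda>x. f (2 *\<^sub>R x) - 8 *\<^sub>R f x) x) \<le> \<psi> x" for x
  proof -
    have "(\<lambda>x. f (2 *\<^sub>R x) - 8 *\<^sub>R f x) x = f (2 *\<^sub>R (2 *\<^sub>R (r *\<^sub>R x))) - 8 *\<^sub>R f (2 *\<^sub>R (r *\<^sub>R x))"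
      using x2[of x] by (metis)
    then show ?thesis using st_id(1)[of f "r *\<^sub>R x", OF f0] nD[of "r *\<^sub>R x"] by (simp add: \<psi>_def)
  qed
  have stc: "norm (8 *\<^sub>R (\<lambda>x. f (2 *\<^sub>R x) - 2 *\<^sub>R f x) (r *\<^sub>R x) - (\<lambda>x. f (2 *\<^sub>R x) - 2 *\<^sub>R f x) x) \<le> \<psi> x" for x
  proof -
    have "(\<lambda>x. f (2 *\<^sub>R x) - 2 *\<^sub>R f x) x = f (2 *\<^sub>R (2 *\<^sub>R (r *\<^sub>R x))) - 2 *\<^sub>R f (2 *\<^sub>R (r *\<^sub>R x))"
      using x2[of x] by (metis)
    then show ?thesis using st_id(2)[of f "r *\<^sub>R x", OF f0] nD[of "r *\<^sub>R x"] by (simp add: \<psi>_def)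
  qed
  have two: "(0::real) < 2" and eight: "(0::real) < 8" by simp_all
  obtain A where bA: "\<And>x. norm (f (2 *\<^sub>R x) - 8 *\<^sub>R f x - A x) \<le> (\<Sum>n. 2^n * \<psi> (r^n *\<^sub>R x))"
    and hA: "\<And>x. A x = 2 *\<^sub>R A (r *\<^sub>R x)" and DA: "\<And>x y. D_f A x y = 0" and oA: "\<And>x. A (-x) = - A x"
    using part[of 2 f \<phi> r "\<lambda>x. f (2 *\<^sub>R x) - 8 *\<^sub>R f x" 8 \<psi>, OF two odd stab l2' refl sta sa] by blast
  obtain C where bC: "\<And>x. norm (f (2 *\<^sub>R x) - 2 *\<^sub>R f x - C x) \<le> (\<Sum>n. 8^n * \<psi> (r^n *\<^sub>R x))"
    and hC: "\<And>x. C x = 8 *\<^sub>R C (r *\<^sub>R x)" and DC: "\<And>x y. D_f C x y = 0" and oC: "\<And>x. C (-x) = - C x"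
    using part[of 8 f \<phi> r "\<lambda>x. f (2 *\<^sub>R x) - 2 *\<^sub>R f x" 2 \<psi>, OF eight odd stab l8' refl stc sc] by blast
  define A' where "A' x = (-1/6::real) *\<^sub>R A x" for x
  define C' where "C' x = (1/6::real) *\<^sub>R C x" for x
  have r2: "r *\<^sub>R (2 *\<^sub>R x) = x" for x :: 'a by (simp add: r_def)
  have r2': "r * 2 = 1" by (simp add: r_def)
  have r2'': "2 * r = 1" by (simp add: r_def)
  have addA: "is_additive A'"
  proof (rule additive_vec)
    show "A' (-x) = - A' x" for x by (simp add: A'_def oA)
    show "D_f A' x y = 0" for x y using D_smult[of "-1/6" A x y] by (simp add: A'_def[abs_def] DA)
    show "A' (2 *\<^sub>R x) = 2 *\<^sub>R A' x" for x using hA[of "2 *\<^sub>R x"] by (simp add: A'_def r2 r2')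
  qed
  have cubC: "is_cubic C'"
  proof (rule cubic_vec)
    show "C' (-x) = - C' x" for x by (simp add: C'_def oC)
    show "D_f C' x y = 0" for x y using D_smult[of "1/6" C x y] by (simp add: C'_def[abs_def] DC)
    show "C' (2 *\<^sub>R x) = 8 *\<^sub>R C' x" for x using hC[of "2 *\<^sub>R x"] by (simp add: C'_def r2 r2')
  qed
  have sumeq: "(\<Sum>n. 8^n * \<psi> (r^n *\<^sub>R x)) + (\<Sum>n. 2^n * \<psi> (r^n *\<^sub>R x)) = (1/2) * (\<Sum>k. ((2::real) ^ k + 8 ^ k) * P x k)" for x
  proof -
    have "(\<Sum>k. ((2::real) ^ k + 8 ^ k) * P x k) = (\<Sum>k. 2^k * P x k + 8^k * P x k)" by (simp add: algebra_simps)
    also have "\<dots> = (\<Sum>k. 2^k * P x k) + (\<Sum>k. 8^k * P x k)" by (rule suminf_add[OF s2' s8', symmetric])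
    finally have e: "(\<Sum>k. ((2::real) ^ k + 8 ^ k) * P x k) = (\<Sum>k. 2^k * P x k) + (\<Sum>k. 8^k * P x k)" .
    have "(\<Sum>n. 8^n * \<psi> (r^n *\<^sub>R x)) = (\<Sum>n. 8^n * P x n / 2)" by (simp add: psi_eq)
    also have "\<dots> = (\<Sum>n. 8^n * P x n) / 2" by (rule suminf_divide[OF s8'])
    finally have e8: "(\<Sum>n. 8^n * \<psi> (r^n *\<^sub>R x)) = (\<Sum>n. 8^n * P x n) / 2" .
    have "(\<Sum>n. 2^n * \<psi> (r^n *\<^sub>R x)) = (\<Sum>n. 2^n * P x n / 2)" by (simp add: psi_eq)
    also have "\<dots> = (\<Sum>n. 2^n * P x n) / 2" by (rule suminf_divide[OF s2'])
    finally have e2: "(\<Sum>n. 2^n * \<psi> (r^n *\<^sub>R x)) = (\<Sum>n. 2^n * P x n) / 2" .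
    show ?thesis using e e8 e2 by simp
  qed
  have bound: "norm (f x - A' x - C' x) \<le> M x" for x
  proof -
    have "norm (f x - A' x - C' x) = (1/6) * norm ((f (2 *\<^sub>R x) - 2 *\<^sub>R f x - C x) - (f (2 *\<^sub>R x) - 8 *\<^sub>R f x - A x))"
    proof -
      have "f x - A' x - C' x = (1/6::real) *\<^sub>R ((f (2 *\<^sub>R x) - 2 *\<^sub>R f x - C x) - (f (2 *\<^sub>R x) - 8 *\<^sub>R f x - A x))"
        unfolding A'_def C'_def by (rule decomp_id)
      then show ?thesis by (simp only: norm_scaleR)
    qed
    also have "\<dots> \<le> (1/6) * (norm (f (2 *\<^sub>R x) - 2 *\<^sub>R f x - C x) + norm (f (2 *\<^sub>R x) - 8 *\<^sub>R f x - A x))"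
      by (intro mult_left_mono norm_triangle_ineq4) auto
    also have "\<dots> \<le> (1/6) * ((\<Sum>n. 8^n * \<psi> (r^n *\<^sub>R x)) + (\<Sum>n. 2^n * \<psi> (r^n *\<^sub>R x)))"
      by (intro mult_left_mono add_mono bA bC) auto
    also have "\<dots> = M x" by (simp add: sumeq M_def)
    finally show ?thesis .
  qed
  have uniq: "A2 = A' \<and> C2 = C'" if a2: "is_additive A2" and c2: "is_cubic C2"
    and b2: "\<forall>x. norm (f x - A2 x - C2 x) \<le> M x" for A2 C2
  proof -
    have ha: "a (r *\<^sub>R y) = inverse 2 *\<^sub>R a y" if "is_additive a" for a :: "'a \<Rightarrow> 'b" and y
    proof -
      have "a y = 2 *\<^sub>R a (r *\<^sub>R y)" using additive_half[OF that, of "r *\<^sub>R y"] by (simp add: r2'')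
      then show ?thesis by simp
    qed
    have hc: "c (r *\<^sub>R y) = inverse 8 *\<^sub>R c y" if "is_cubic c" for c :: "'a \<Rightarrow> 'b" and y
    proof -
      have "c y = 8 *\<^sub>R c (r *\<^sub>R y)" using cubic_props(2)[OF that, of "r *\<^sub>R y"] by (simp add: r2'')
      then show ?thesis by simp
    qed
    have eq: "A' x = A2 x \<and> C' x = C2 x" for x
    proof -
      have "(\<lambda>y. A' y - A2 y) x = 0 \<and> (\<lambda>y. C' y - C2 y) x = 0"
      proof (rule kill[where u = "\<lambda>y. A' y - A2 y" and v = "\<lambda>y. C' y - C2 y" and r = r and \<alpha> = "inverse 2" and \<beta> = "inverse 8" and N = "\<lambda>n. 2 * M (r^n *\<^sub>R x)"])
        show "(A' (r ^ n *\<^sub>R x) - A2 (r ^ n *\<^sub>R x)) = inverse 2 ^ n *\<^sub>R (A' x - A2 x)" for n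
          using pow_hom[of A' r "inverse 2", OF ha[OF addA]] pow_hom[of A2 r "inverse 2", OF ha[OF a2]]
          by (simp add: scaleR_right_diff_distrib)
        show "(C' (r ^ n *\<^sub>R x) - C2 (r ^ n *\<^sub>R x)) = inverse 8 ^ n *\<^sub>R (C' x - C2 x)" for n
          using pow_hom[of C' r "inverse 8", OF hc[OF cubC]] pow_hom[of C2 r "inverse 8", OF hc[OF c2]]
          by (simp add: scaleR_right_diff_distrib)
        show "0 < (inverse 8::real)" by simp
        show "(inverse 8::real) < inverse 2" by simp
        show "norm ((A' (r ^ n *\<^sub>R x) - A2 (r ^ n *\<^sub>R x)) + (C' (r ^ n *\<^sub>R x) - C2 (r ^ n *\<^sub>R x))) \<le> 2 * M (r^n *\<^sub>R x)" for n
        proof -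
          let ?y = "r ^ n *\<^sub>R x"
          have "(A' ?y - A2 ?y) + (C' ?y - C2 ?y) = (f ?y - A2 ?y - C2 ?y) - (f ?y - A' ?y - C' ?y)"
            by (simp add: algebra_simps)
          then have "norm ((A' ?y - A2 ?y) + (C' ?y - C2 ?y)) \<le> norm (f ?y - A2 ?y - C2 ?y) + norm (f ?y - A' ?y - C' ?y)"
            by (metis norm_triangle_ineq4)
          also have "\<dots> \<le> M ?y + M ?y" using b2 bound by (intro add_mono) auto
          finally show ?thesis by simp
        qed
        show "(\<lambda>n. 2 * M (r^n *\<^sub>R x) / inverse 8 ^ n) \<longlonglongrightarrow> 0"
        proof (rule Lim_null_comparison)
          define t where "t j = 8^j * P x j" for j
          have st: "summable t" unfolding t_def by (rule s8')
          have Pn: "P (r^n *\<^sub>R x) k = P x (k + n)" for n k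
          proof -
            have "inverse (2 ^ Suc k) *\<^sub>R (r^n *\<^sub>R x) = inverse (2 ^ Suc (k + n)) *\<^sub>R x"
              by (simp add: rn power_add)
            then show ?thesis by (simp only: P_def)
          qed
          show "\<forall>\<^sub>F n in sequentially. norm (2 * M (r^n *\<^sub>R x) / inverse 8 ^ n) \<le> (1/3) * (\<Sum>k. t (k + n))"
          proof (intro always_eventually allI)
            fix n
            have stn: "summable (\<lambda>k. t (k + n))" using summable_ignore_initial_segment[OF st] .
            have le: "8^n * ((2::real) ^ k + 8 ^ k) * P x (k+n) \<le> 2 * t (k + n)" for k
            proof -
              have "8^n * ((2::real) ^ k + 8 ^ k) \<le> 2 * 8^(k+n)"
              proof -
                have "(2::real)^k \<le> 8^k" by (intro power_mono) auto
                then show ?thesis by (simp add: power_add algebra_simps)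
              qed
              from mult_right_mono[OF this P0[of x "k+n"]]
              show ?thesis unfolding t_def by (simp only: mult.assoc)
            qed
            have sl: "summable (\<lambda>k. 8^n * ((2::real) ^ k + 8 ^ k) * P x (k+n))"
              by (rule summable_comparison_test[OF _ summable_mult[OF stn, of 2]]) (use le P0 in auto)
            have Mn: "M (r^n *\<^sub>R x) = (1/12) * (\<Sum>k. ((2::real) ^ k + 8 ^ k) * P x (k+n))"
              by (simp add: M_def Pn)
            have M0: "M (r^n *\<^sub>R x) \<ge> 0" unfolding M_def
              by (intro mult_nonneg_nonneg suminf_nonneg sM) (auto simp: P0)
            have "2 * M (r^n *\<^sub>R x) / inverse 8 ^ n = (1/6) * (8^n * (\<Sum>k. ((2::real) ^ k + 8 ^ k) * P x (k+n)))"
              by (simp add: Mn power_one_over)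
            also have "\<dots> = (1/6) * (\<Sum>k. 8^n * ((2::real) ^ k + 8 ^ k) * P x (k+n))"
              using sl by (simp add: suminf_mult[symmetric] mult.assoc)
            also have "\<dots> \<le> (1/6) * (\<Sum>k. 2 * t (k + n))"
              by (intro mult_left_mono suminf_le le sl summable_mult stn) auto
            also have "\<dots> = (1/3) * (\<Sum>k. t (k + n))" using suminf_mult[OF stn, of 2] by simp
            finally show "norm (2 * M (r^n *\<^sub>R x) / inverse 8 ^ n) \<le> (1/3) * (\<Sum>k. t (k + n))"
              using M0 by simp
          qed
          show "(\<lambda>n. (1/3) * (\<Sum>k. t (k + n))) \<longlonglongrightarrow> 0"
            using tendsto_mult_right_zero[OF tail0[OF st], of "1/3"] by simp
        qed
      qed
      then show ?thesis by simp
    qed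
    show ?thesis using eq by auto
  qed
  show ?thesis
    apply (rule exI[of _ A'], rule exI[of _ C'])
    using addA cubC bound uniq unfolding M_def P_def by blast
qed

lemma main2:
  fixes f :: "'a::real_normed_vector \<Rightarrow> 'b::banach"
    and \<phi> :: "'a \<Rightarrow> 'a \<Rightarrow> real"
  assumes odd: "\<And>x. f (- x) = - f x"
    and phi_nonneg: "\<And>x y. \<phi> x y \<ge> 0"
    and stab: "\<And>x y. norm (D_f f x y) \<le> \<phi> x y"
    and s2: "\<And>x. summable (\<lambda>i. inverse ((2::real) ^ Suc i) * \<phi> (2 ^ Suc i *\<^sub>R x) (2 ^ Suc i *\<^sub>R x))"
    and s8: "\<And>x. summable (\<lambda>i. inverse ((8::real) ^ Suc i) * \<phi> (2 ^ Suc i *\<^sub>R x) (2 ^ Suc i *\<^sub>R x))"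
    and l2: "\<And>x y. (\<lambda>n. inverse ((2::real) ^ n) * \<phi> (2 ^ n *\<^sub>R x) (2 ^ n *\<^sub>R y)) \<longlonglongrightarrow> 0"
    and l8: "\<And>x y. (\<lambda>n. inverse ((8::real) ^ n) * \<phi> (2 ^ n *\<^sub>R x) (2 ^ n *\<^sub>R y)) \<longlonglongrightarrow> 0"
  shows "\<exists>A C. is_additive A \<and> is_cubic C \<and>
     (\<forall>x. norm (f x - A x - C x) \<le> (1/12) *
        (\<Sum>k. (inverse ((2::real) ^ Suc k) + inverse (8 ^ Suc k)) * \<phi> (2 ^ k *\<^sub>R x) (2 ^ k *\<^sub>R x))) \<and>
     (\<forall>A' C'. is_additive A' \<and> is_cubic C' \<and>
        (\<forall>x. norm (f x - A' x - C' x) \<le> (1/12) *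
          (\<Sum>k. (inverse ((2::real) ^ Suc k) + inverse (8 ^ Suc k)) * \<phi> (2 ^ k *\<^sub>R x) (2 ^ k *\<^sub>R x)))
        \<longrightarrow> A' = A \<and> C' = C)"
proof -
  define P where "P x k = \<phi> ((2::real) ^ k *\<^sub>R x) (2 ^ k *\<^sub>R x)" for x k
  define Q2 where "Q2 x k = inverse ((2::real) ^ Suc k) * P x k" for x k
  define Q8 where "Q8 x k = inverse ((8::real) ^ Suc k) * P x k" for x k
  define \<psi>a where "\<psi>a x = \<phi> x x / 4" for x
  define \<psi>c where "\<psi>c x = \<phi> x x / 16" for x
  define M where "M x = (1/12) * (\<Sum>k. (inverse ((2::real) ^ Suc k) + inverse (8 ^ Suc k)) * P x k)" for x
  have f0: "f 0 = 0"
  proof -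
    have "f 0 + f 0 = 0" using odd[of 0] by (simp add: eq_neg_iff_add_eq_0)
    then have "2 *\<^sub>R f 0 = 0" by (simp add: scaleR_2)
    then show ?thesis by simp
  qed
  have i2: "inverse (2::real) ^ n = inverse (2 ^ n)" for n by (rule power_inverse)
  have i8: "inverse (8::real) ^ n = inverse (8 ^ n)" for n by (rule power_inverse)
  have P0: "P x k \<ge> 0" for x k by (simp add: P_def phi_nonneg)
  have s2': "summable (Q2 x)" for x
  proof -
    have "summable (\<lambda>n. Q2 x (Suc n) * 2)" using summable_mult2[OF s2[of x], of 2] by (simp add: Q2_def P_def)
    then have "summable (\<lambda>n. Q2 x (Suc n))" using summable_divide[of _ 2] by fastforce
    then show ?thesis by (simp only: summable_Suc_iff)
  qed
  have s8': "summable (Q8 x)" for x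
  proof -
    have "summable (\<lambda>n. Q8 x (Suc n) * 8)" using summable_mult2[OF s8[of x], of 8] by (simp add: Q8_def P_def)
    then have "summable (\<lambda>n. Q8 x (Suc n))" using summable_divide[of _ 8] by fastforce
    then show ?thesis by (simp only: summable_Suc_iff)
  qed
  have sM: "summable (\<lambda>k. (inverse ((2::real) ^ Suc k) + inverse (8 ^ Suc k)) * P y k)" for y
    using summable_add[OF s2'[of y] s8'[of y]] by (simp add: distrib_right Q2_def Q8_def)
  have ea: "inverse (2::real) ^ n * \<psi>a ((2::real) ^ n *\<^sub>R x) = Q2 x n / 2" for n x
    by (simp add: i2 \<psi>a_def Q2_def P_def field_simps)
  have ec: "inverse (8::real) ^ n * \<psi>c ((2::real) ^ n *\<^sub>R x) = Q8 x n / 2" for n x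
    by (simp add: i8 \<psi>c_def Q8_def P_def field_simps)
  have sa: "summable (\<lambda>n. inverse (2::real) ^ n * \<psi>a ((2::real) ^ n *\<^sub>R x))" for x
    unfolding ea by (rule summable_divide[OF s2'])
  have sc: "summable (\<lambda>n. inverse (8::real) ^ n * \<psi>c ((2::real) ^ n *\<^sub>R x))" for x
    unfolding ec by (rule summable_divide[OF s8'])
  have l2': "(\<lambda>n. inverse (2::real) ^ n * \<phi> ((2::real)^n *\<^sub>R x) ((2::real)^n *\<^sub>R y)) \<longlonglongrightarrow> 0" for x y
    unfolding i2 by (rule l2)
  have l8': "(\<lambda>n. inverse (8::real) ^ n * \<phi> ((2::real)^n *\<^sub>R x) ((2::real)^n *\<^sub>R y)) \<longlonglongrightarrow> 0" for x y
    unfolding i8 by (rule l8)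
  have sta: "norm (inverse 2 *\<^sub>R (\<lambda>x. f (2 *\<^sub>R x) - 8 *\<^sub>R f x) (2 *\<^sub>R x) - (\<lambda>x. f (2 *\<^sub>R x) - 8 *\<^sub>R f x) x) \<le> \<psi>a x" for x
    using st_id(3)[of f x, OF f0] stab[of x x] by (simp add: \<psi>a_def inverse_eq_divide)
  have stc: "norm (inverse 8 *\<^sub>R (\<lambda>x. f (2 *\<^sub>R x) - 2 *\<^sub>R f x) (2 *\<^sub>R x) - (\<lambda>x. f (2 *\<^sub>R x) - 2 *\<^sub>R f x) x) \<le> \<psi>c x" for x
    using st_id(4)[of f x, OF f0] stab[of x x] by (simp add: \<psi>c_def inverse_eq_divide)
  have two: "(0::real) < inverse 2" and eight: "(0::real) < inverse 8" by simp_all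
  obtain A where bA: "\<And>x. norm (f (2 *\<^sub>R x) - 8 *\<^sub>R f x - A x) \<le> (\<Sum>n. inverse (2::real) ^ n * \<psi>a ((2::real) ^ n *\<^sub>R x))"
    and hA: "\<And>x. A x = inverse 2 *\<^sub>R A (2 *\<^sub>R x)" and DA: "\<And>x y. D_f A x y = 0" and oA: "\<And>x. A (-x) = - A x"
    using part[of "inverse 2" f \<phi> 2 "\<lambda>x. f (2 *\<^sub>R x) - 8 *\<^sub>R f x" 8 \<psi>a, OF two odd stab l2' refl sta sa] by blast
  obtain C where bC: "\<And>x. norm (f (2 *\<^sub>R x) - 2 *\<^sub>R f x - C x) \<le> (\<Sum>n. inverse (8::real) ^ n * \<psi>c ((2::real) ^ n *\<^sub>R x))"
    and hC: "\<And>x. C x = inverse 8 *\<^sub>R C (2 *\<^sub>R x)" and DC: "\<And>x y. D_f C x y = 0" and oC: "\<And>x. C (-x) = - C x"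
    using part[of "inverse 8" f \<phi> 2 "\<lambda>x. f (2 *\<^sub>R x) - 2 *\<^sub>R f x" 2 \<psi>c, OF eight odd stab l8' refl stc sc] by blast
  define A' where "A' x = (-1/6::real) *\<^sub>R A x" for x
  define C' where "C' x = (1/6::real) *\<^sub>R C x" for x
  have hA2: "A (2 *\<^sub>R x) = 2 *\<^sub>R A x" for x
  proof -
    have "2 *\<^sub>R A x = 2 *\<^sub>R (inverse 2 *\<^sub>R A (2 *\<^sub>R x))" using hA[of x] by simp
    then show ?thesis by simp
  qed
  have hC2: "C (2 *\<^sub>R x) = 8 *\<^sub>R C x" for x
  proof -
    have "8 *\<^sub>R C x = 8 *\<^sub>R (inverse 8 *\<^sub>R C (2 *\<^sub>R x))" using hC[of x] by simp
    then show ?thesis by simp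
  qed
  have addA: "is_additive A'"
  proof (rule additive_vec)
    show "A' (-x) = - A' x" for x by (simp add: A'_def oA)
    show "D_f A' x y = 0" for x y using D_smult[of "-1/6" A x y] by (simp add: A'_def[abs_def] DA)
    show "A' (2 *\<^sub>R x) = 2 *\<^sub>R A' x" for x by (simp add: A'_def hA2)
  qed
  have cubC: "is_cubic C'"
  proof (rule cubic_vec)
    show "C' (-x) = - C' x" for x by (simp add: C'_def oC)
    show "D_f C' x y = 0" for x y using D_smult[of "1/6" C x y] by (simp add: C'_def[abs_def] DC)
    show "C' (2 *\<^sub>R x) = 8 *\<^sub>R C' x" for x by (simp add: C'_def hC2)
  qed
  have sumeq: "(\<Sum>n. inverse (8::real) ^ n * \<psi>c ((2::real) ^ n *\<^sub>R x)) + (\<Sum>n. inverse (2::real) ^ n * \<psi>a ((2::real) ^ n *\<^sub>R x))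
      = (1/2) * (\<Sum>k. (inverse ((2::real) ^ Suc k) + inverse (8 ^ Suc k)) * P x k)" for x
  proof -
    have "(\<Sum>k. (inverse ((2::real) ^ Suc k) + inverse (8 ^ Suc k)) * P x k) = (\<Sum>k. Q2 x k + Q8 x k)"
      by (simp add: algebra_simps Q2_def Q8_def)
    also have "\<dots> = (\<Sum>k. Q2 x k) + (\<Sum>k. Q8 x k)" by (rule suminf_add[OF s2' s8', symmetric])
    finally have e: "(\<Sum>k. (inverse ((2::real) ^ Suc k) + inverse (8 ^ Suc k)) * P x k) = (\<Sum>k. Q2 x k) + (\<Sum>k. Q8 x k)" .
    have e8: "(\<Sum>n. inverse (8::real) ^ n * \<psi>c ((2::real) ^ n *\<^sub>R x)) = (\<Sum>n. Q8 x n) / 2"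
      unfolding ec by (rule suminf_divide[OF s8'])
    have e2: "(\<Sum>n. inverse (2::real) ^ n * \<psi>a ((2::real) ^ n *\<^sub>R x)) = (\<Sum>n. Q2 x n) / 2"
      unfolding ea by (rule suminf_divide[OF s2'])
    show ?thesis using e e8 e2 by simp
  qed
  have bound: "norm (f x - A' x - C' x) \<le> M x" for x
  proof -
    have "norm (f x - A' x - C' x) = (1/6) * norm ((f (2 *\<^sub>R x) - 2 *\<^sub>R f x - C x) - (f (2 *\<^sub>R x) - 8 *\<^sub>R f x - A x))"
    proof -
      have "f x - A' x - C' x = (1/6::real) *\<^sub>R ((f (2 *\<^sub>R x) - 2 *\<^sub>R f x - C x) - (f (2 *\<^sub>R x) - 8 *\<^sub>R f x - A x))"
        unfolding A'_def C'_def by (rule decomp_id)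
      then show ?thesis by (simp only: norm_scaleR)
    qed
    also have "\<dots> \<le> (1/6) * (norm (f (2 *\<^sub>R x) - 2 *\<^sub>R f x - C x) + norm (f (2 *\<^sub>R x) - 8 *\<^sub>R f x - A x))"
      by (intro mult_left_mono norm_triangle_ineq4) auto
    also have "\<dots> \<le> (1/6) * ((\<Sum>n. inverse (8::real) ^ n * \<psi>c ((2::real) ^ n *\<^sub>R x)) + (\<Sum>n. inverse (2::real) ^ n * \<psi>a ((2::real) ^ n *\<^sub>R x)))"
      by (intro mult_left_mono add_mono bA bC) auto
    also have "\<dots> = M x" unfolding M_def sumeq by simp
    finally show ?thesis .
  qed
  have uniq: "A2 = A' \<and> C2 = C'" if a2: "is_additive A2" and c2: "is_cubic C2"
    and b2: "\<forall>x. norm (f x - A2 x - C2 x) \<le> M x" for A2 C2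
  proof -
    have eq: "A' x = A2 x \<and> C' x = C2 x" for x
    proof -
      have "(\<lambda>y. C' y - C2 y) x = 0 \<and> (\<lambda>y. A' y - A2 y) x = 0"
      proof (rule kill[where u = "\<lambda>y. C' y - C2 y" and v = "\<lambda>y. A' y - A2 y" and r = 2 and \<alpha> = 8 and \<beta> = 2 and N = "\<lambda>n. 2 * M ((2::real)^n *\<^sub>R x)"])
        show "(C' ((2::real) ^ n *\<^sub>R x) - C2 ((2::real) ^ n *\<^sub>R x)) = 8 ^ n *\<^sub>R (C' x - C2 x)" for n
          using pow_hom[of C' 2 8, OF cubic_props(2)[OF cubC]] pow_hom[of C2 2 8, OF cubic_props(2)[OF c2]]
          by (simp add: scaleR_right_diff_distrib)
        show "(A' ((2::real) ^ n *\<^sub>R x) - A2 ((2::real) ^ n *\<^sub>R x)) = 2 ^ n *\<^sub>R (A' x - A2 x)" for n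
          using pow_hom[of A' 2 2, OF additive_half[OF addA]] pow_hom[of A2 2 2, OF additive_half[OF a2]]
          by (simp add: scaleR_right_diff_distrib)
        show "0 < (2::real)" by simp
        show "(2::real) < 8" by simp
        show "norm ((C' ((2::real) ^ n *\<^sub>R x) - C2 ((2::real) ^ n *\<^sub>R x)) + (A' ((2::real) ^ n *\<^sub>R x) - A2 ((2::real) ^ n *\<^sub>R x))) \<le> 2 * M ((2::real)^n *\<^sub>R x)" for n
        proof -
          let ?y = "(2::real) ^ n *\<^sub>R x"
          have "(C' ?y - C2 ?y) + (A' ?y - A2 ?y) = (f ?y - A2 ?y - C2 ?y) - (f ?y - A' ?y - C' ?y)"
            by (simp add: algebra_simps)
          then have "norm ((C' ?y - C2 ?y) + (A' ?y - A2 ?y)) \<le> norm (f ?y - A2 ?y - C2 ?y) + norm (f ?y - A' ?y - C' ?y)"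
            by (metis norm_triangle_ineq4)
          also have "\<dots> \<le> M ?y + M ?y" using b2 bound by (intro add_mono) auto
          finally show ?thesis by simp
        qed
        show "(\<lambda>n. 2 * M ((2::real)^n *\<^sub>R x) / 2 ^ n) \<longlonglongrightarrow> 0"
        proof (rule Lim_null_comparison)
          define t where "t j = Q2 x j" for j
          have st: "summable t" unfolding t_def by (rule s2')
          have Pn: "P ((2::real)^n *\<^sub>R x) k = P x (k + n)" for n k
            by (simp add: P_def power_add)
          show "\<forall>\<^sub>F n in sequentially. norm (2 * M ((2::real)^n *\<^sub>R x) / 2 ^ n) \<le> (1/3) * (\<Sum>k. t (k + n))"
          proof (intro always_eventually allI)
            fix n
            have stn: "summable (\<lambda>k. t (k + n))" using summable_ignore_initial_segment[OF st] .
            have le: "(inverse ((2::real) ^ Suc k) + inverse (8 ^ Suc k)) * P x (k+n) / 2^n \<le> 2 * t (k + n)" for k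
            proof -
              have i: "inverse ((8::real) ^ Suc k) \<le> inverse (2 ^ Suc k)"
                by (intro le_imp_inverse_le power_mono) auto
              have e: "inverse ((2::real) ^ Suc k) / 2^n = inverse (2 ^ Suc (k + n))"
                by (simp add: power_add field_simps)
              have "(inverse ((2::real) ^ Suc k) + inverse (8 ^ Suc k)) / 2^n \<le> 2 * inverse (2 ^ Suc (k + n))"
              proof -
                have "(inverse ((2::real) ^ Suc k) + inverse (8 ^ Suc k)) / 2^n \<le> (2 * inverse (2 ^ Suc k)) / 2^n"
                  using i by (intro divide_right_mono) auto
                also have "\<dots> = 2 * inverse (2 ^ Suc (k + n))" using e by simp
                finally show ?thesis .
              qed
              from mult_right_mono[OF this P0[of x "k+n"]]
              show ?thesis unfolding t_def Q2_def by (simp add: algebra_simps)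
            qed
            have sl: "summable (\<lambda>k. (inverse ((2::real) ^ Suc k) + inverse (8 ^ Suc k)) * P x (k+n) / 2^n)"
              by (rule summable_comparison_test[OF _ summable_mult[OF stn, of 2]]) (use le P0 in auto)
            have Mn: "M ((2::real)^n *\<^sub>R x) = (1/12) * (\<Sum>k. (inverse ((2::real) ^ Suc k) + inverse (8 ^ Suc k)) * P x (k+n))"
              by (simp add: M_def Pn)
            have M0: "M ((2::real)^n *\<^sub>R x) \<ge> 0" unfolding M_def
              by (intro mult_nonneg_nonneg suminf_nonneg sM) (auto simp: P0)
            have sl0: "summable (\<lambda>k. (inverse ((2::real) ^ Suc k) + inverse (8 ^ Suc k)) * P x (k+n))"
              using sM[of "(2::real)^n *\<^sub>R x"] by (simp add: Pn)
            have "2 * M ((2::real)^n *\<^sub>R x) / 2 ^ n = (1/6) * ((\<Sum>k. (inverse ((2::real) ^ Suc k) + inverse (8 ^ Suc k)) * P x (k+n)) / 2^n)"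
              by (simp add: Mn)
            also have "\<dots> = (1/6) * (\<Sum>k. (inverse ((2::real) ^ Suc k) + inverse (8 ^ Suc k)) * P x (k+n) / 2^n)"
              using suminf_divide[OF sl0, of "2^n"] by simp
            also have "\<dots> \<le> (1/6) * (\<Sum>k. 2 * t (k + n))"
              by (intro mult_left_mono suminf_le le sl summable_mult stn) auto
            also have "\<dots> = (1/3) * (\<Sum>k. t (k + n))" using suminf_mult[OF stn, of 2] by simp
            finally show "norm (2 * M ((2::real)^n *\<^sub>R x) / 2 ^ n) \<le> (1/3) * (\<Sum>k. t (k + n))"
              using M0 by simp
          qed
          show "(\<lambda>n. (1/3) * (\<Sum>k. t (k + n))) \<longlonglongrightarrow> 0"
            using tendsto_mult_right_zero[OF tail0[OF st], of "1/3"] by simp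
        qed
      qed
      then show ?thesis by simp
    qed
    show ?thesis using eq by auto
  qed
  show ?thesis
    apply (rule exI[of _ A'], rule exI[of _ C'])
    using addA cubC bound uniq unfolding M_def P_def by blast
qed

theorem theorem3p3:
  fixes f :: "'a::real_normed_vector \<Rightarrow> 'b::banach"
    and \<phi> :: "'a \<Rightarrow> 'a \<Rightarrow> real"
    and l :: int
  assumes l: "l \<in> {-1, 1}"
    and odd: "\<forall>x. f (- x) = - f x"
    and phi_nonneg: "\<forall>x y. \<phi> x y \<ge> 0"
    and stab: "\<forall>x y. norm (D_f f x y) \<le> \<phi> x y"
    and sum2: "\<forall>x. summable (\<lambda>i::nat. (2::real) powi (int (Suc i) * l) *
                  \<phi> (inverse ((2::real) powi (int (Suc i) * l)) *\<^sub>R x)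
                    (inverse ((2::real) powi (int (Suc i) * l)) *\<^sub>R x))"
    and sum8: "\<forall>x. summable (\<lambda>i::nat. (8::real) powi (int (Suc i) * l) *
                  \<phi> (inverse ((2::real) powi (int (Suc i) * l)) *\<^sub>R x)
                    (inverse ((2::real) powi (int (Suc i) * l)) *\<^sub>R x))"
    and lim2: "\<forall>x y. (\<lambda>n::nat. (2::real) powi (l * int n) *
                  \<phi> (inverse ((2::real) powi (l * int n)) *\<^sub>R x)
                    (inverse ((2::real) powi (l * int n)) *\<^sub>R y)) \<longlonglongrightarrow> 0"
    and lim8: "\<forall>x y. (\<lambda>n::nat. (8::real) powi (l * int n) *
                  \<phi> (inverse ((2::real) powi (l * int n)) *\<^sub>R x)
                    (inverse ((2::real) powi (l * int n)) *\<^sub>R y)) \<longlonglongrightarrow> 0"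
  shows "\<exists>A C. is_additive A \<and> is_cubic C \<and>
     (\<forall>x. norm (f x - A x - C x) \<le> (1/12) *
        (\<Sum>k. let i = int k + \<bar>l - 1\<bar> div 2 in
           ((2::real) powi (i * l) + (8::real) powi (i * l)) *
           \<phi> (inverse ((2::real) powi (l * (i + l))) *\<^sub>R x)
             (inverse ((2::real) powi (l * (i + l))) *\<^sub>R x))) \<and>
     (\<forall>A' C'. is_additive A' \<and> is_cubic C' \<and>
        (\<forall>x. norm (f x - A' x - C' x) \<le> (1/12) *
          (\<Sum>k. let i = int k + \<bar>l - 1\<bar> div 2 in
             ((2::real) powi (i * l) + (8::real) powi (i * l)) *
             \<phi> (inverse ((2::real) powi (l * (i + l))) *\<^sub>R x)
               (inverse ((2::real) powi (l * (i + l))) *\<^sub>R x)))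
        \<longrightarrow> A' = A \<and> C' = C)"
proof -
  from l have "l = 1 \<or> l = -1" by auto
  then show ?thesis
  proof
    assume l1: "l = 1"
    have T: "(\<lambda>k. let i = int k + \<bar>l - 1\<bar> div 2 in
           ((2::real) powi (i * l) + (8::real) powi (i * l)) *
           \<phi> (inverse ((2::real) powi (l * (i + l))) *\<^sub>R x)
             (inverse ((2::real) powi (l * (i + l))) *\<^sub>R x))
        = (\<lambda>k. ((2::real) ^ k + 8 ^ k) * \<phi> (inverse (2 ^ Suc k) *\<^sub>R x) (inverse (2 ^ Suc k) *\<^sub>R x))" for x
    proof (rule ext)
      fix k :: nat
      have e1: "int k + \<bar>l - 1\<bar> div 2 = int k" using l1 by simp
      have e2: "int k * l = int k" using l1 by simp
      have e3: "l * (int k + l) = int (Suc k)" using l1 by simp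
      show "(let i = int k + \<bar>l - 1\<bar> div 2 in
           ((2::real) powi (i * l) + (8::real) powi (i * l)) *
           \<phi> (inverse ((2::real) powi (l * (i + l))) *\<^sub>R x)
             (inverse ((2::real) powi (l * (i + l))) *\<^sub>R x))
        = ((2::real) ^ k + 8 ^ k) * \<phi> (inverse (2 ^ Suc k) *\<^sub>R x) (inverse (2 ^ Suc k) *\<^sub>R x)"
        by (simp only: Let_def e1 e2 e3 power_int_of_nat)
    qed
    have ea: "int (Suc i) * l = int (Suc i)" for i using l1 by simp
    have eb: "l * int n = int n" for n using l1 by simp
    have h1: "f (- x) = - f x" for x using odd by blast
    have h2: "\<phi> x y \<ge> 0" for x y using phi_nonneg by blast
    have h3: "norm (D_f f x y) \<le> \<phi> x y" for x y using stab by blast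
    have h4: "summable (\<lambda>i. (2::real) ^ Suc i * \<phi> (inverse (2 ^ Suc i) *\<^sub>R x) (inverse (2 ^ Suc i) *\<^sub>R x))" for x
      using sum2 unfolding ea power_int_of_nat by blast
    have h5: "summable (\<lambda>i. (8::real) ^ Suc i * \<phi> (inverse (2 ^ Suc i) *\<^sub>R x) (inverse (2 ^ Suc i) *\<^sub>R x))" for x
      using sum8 unfolding ea power_int_of_nat by blast
    have h6: "(\<lambda>n. (2::real) ^ n * \<phi> (inverse (2 ^ n) *\<^sub>R x) (inverse (2 ^ n) *\<^sub>R y)) \<longlonglongrightarrow> 0" for x y
      using lim2 unfolding eb power_int_of_nat by blast
    have h7: "(\<lambda>n. (8::real) ^ n * \<phi> (inverse (2 ^ n) *\<^sub>R x) (inverse (2 ^ n) *\<^sub>R y)) \<longlonglongrightarrow> 0" for x y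
      using lim8 unfolding eb power_int_of_nat by blast
    have G: "\<exists>A C. is_additive A \<and> is_cubic C \<and>
     (\<forall>x. norm (f x - A x - C x) \<le> (1/12) *
        (\<Sum>k. ((2::real) ^ k + 8 ^ k) * \<phi> (inverse (2 ^ Suc k) *\<^sub>R x) (inverse (2 ^ Suc k) *\<^sub>R x))) \<and>
     (\<forall>A' C'. is_additive A' \<and> is_cubic C' \<and>
        (\<forall>x. norm (f x - A' x - C' x) \<le> (1/12) *
          (\<Sum>k. ((2::real) ^ k + 8 ^ k) * \<phi> (inverse (2 ^ Suc k) *\<^sub>R x) (inverse (2 ^ Suc k) *\<^sub>R x)))
        \<longrightarrow> A' = A \<and> C' = C)"
      by (rule main1[OF h1 h2 h3 h4 h5 h6 h7])
    show ?thesis unfolding T by (rule G)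
  next
    assume l1: "l = -1"
    have T: "(\<lambda>k. let i = int k + \<bar>l - 1\<bar> div 2 in
           ((2::real) powi (i * l) + (8::real) powi (i * l)) *
           \<phi> (inverse ((2::real) powi (l * (i + l))) *\<^sub>R x)
             (inverse ((2::real) powi (l * (i + l))) *\<^sub>R x))
        = (\<lambda>k. (inverse ((2::real) ^ Suc k) + inverse (8 ^ Suc k)) * \<phi> (2 ^ k *\<^sub>R x) (2 ^ k *\<^sub>R x))" for x
    proof (rule ext)
      fix k :: nat
      have e1: "int k + \<bar>l - 1\<bar> div 2 = int k + 1" using l1 by simp
      have e2: "(int k + 1) * l = - int (Suc k)" using l1 by simp
      have e3: "l * (int k + 1 + l) = - int k" using l1 by simp
      show "(let i = int k + \<bar>l - 1\<bar> div 2 in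
           ((2::real) powi (i * l) + (8::real) powi (i * l)) *
           \<phi> (inverse ((2::real) powi (l * (i + l))) *\<^sub>R x)
             (inverse ((2::real) powi (l * (i + l))) *\<^sub>R x))
        = (inverse ((2::real) ^ Suc k) + inverse (8 ^ Suc k)) * \<phi> (2 ^ k *\<^sub>R x) (2 ^ k *\<^sub>R x)"
        by (simp only: Let_def e1 e2 e3 power_int_minus power_int_of_nat inverse_inverse_eq)
    qed
    have ea: "int (Suc i) * l = - int (Suc i)" for i using l1 by simp
    have eb: "l * int n = - int n" for n using l1 by simp
    have h1: "f (- x) = - f x" for x using odd by blast
    have h2: "\<phi> x y \<ge> 0" for x y using phi_nonneg by blast
    have h3: "norm (D_f f x y) \<le> \<phi> x y" for x y using stab by blast
    have h4: "summable (\<lambda>i. inverse ((2::real) ^ Suc i) * \<phi> (2 ^ Suc i *\<^sub>R x) (2 ^ Suc i *\<^sub>R x))" for x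
      using sum2 unfolding ea power_int_minus power_int_of_nat inverse_inverse_eq by blast
    have h5: "summable (\<lambda>i. inverse ((8::real) ^ Suc i) * \<phi> (2 ^ Suc i *\<^sub>R x) (2 ^ Suc i *\<^sub>R x))" for x
      using sum8 unfolding ea power_int_minus power_int_of_nat inverse_inverse_eq by blast
    have h6: "(\<lambda>n. inverse ((2::real) ^ n) * \<phi> (2 ^ n *\<^sub>R x) (2 ^ n *\<^sub>R y)) \<longlonglongrightarrow> 0" for x y
      using lim2 unfolding eb power_int_minus power_int_of_nat inverse_inverse_eq by blast
    have h7: "(\<lambda>n. inverse ((8::real) ^ n) * \<phi> (2 ^ n *\<^sub>R x) (2 ^ n *\<^sub>R y)) \<longlonglongrightarrow> 0" for x y
      using lim8 unfolding eb power_int_minus power_int_of_nat inverse_inverse_eq by blast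
    have G: "\<exists>A C. is_additive A \<and> is_cubic C \<and>
     (\<forall>x. norm (f x - A x - C x) \<le> (1/12) *
        (\<Sum>k. (inverse ((2::real) ^ Suc k) + inverse (8 ^ Suc k)) * \<phi> (2 ^ k *\<^sub>R x) (2 ^ k *\<^sub>R x))) \<and>
     (\<forall>A' C'. is_additive A' \<and> is_cubic C' \<and>
        (\<forall>x. norm (f x - A' x - C' x) \<le> (1/12) *
          (\<Sum>k. (inverse ((2::real) ^ Suc k) + inverse (8 ^ Suc k)) * \<phi> (2 ^ k *\<^sub>R x) (2 ^ k *\<^sub>R x)))
        \<longrightarrow> A' = A \<and> C' = C)"
      by (rule main2[OF h1 h2 h3 h4 h5 h6 h7])
    show ?thesis unfolding T by (rule G)
  qed
qed
end
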